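(* Let $G$ be a finite group, $D$ a Dedekind domain of characteristic $0$, and $A$ a $DG$-module which is a $P$-module for some maximal ideal $P$ of $D$. If $\mathrm{char}(D/P)=0$ and $\mathrm{sr}_{DG}(A)=r\in\mathbb{N}$, then $A$ is an Artinian $D$-module.
   Context: $A$ is a $P$-module if for every $a\in A$ there is $n\in\mathbb{N}$ with $aP^n=0$. A generating subset of a submodule is minimal if no proper subset generates it; $\mathrm{sr}_{DG}(A)=r$ means every finitely generated $DG$-submodule of $A$ can be generated by $r$ elements and some finitely generated $DG$-submodule has a minimal generating subset of exactly $r$ elements. *)

theory Defs
  imports Complex_Main "HOL-Algebra.Group"
begin

definition is_ideal :: "'d::comm_ring_1 set \<Rightarrow> bool" where
  "is_ideal I \<longleftrightarrow> 0 \<in> I \<and> (\<forall>x\<in>I. \<forall>y\<in>I. x + y \<in> I) \<and> (\<forall>r. \<forall>x\<in>I. r * x \<in> I)"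

definition prime_ideal :: "'d::comm_ring_1 set \<Rightarrow> bool" where
  "prime_ideal P \<longleftrightarrow> is_ideal P \<and> P \<noteq> UNIV \<and> (\<forall>a b. a * b \<in> P \<longrightarrow> a \<in> P \<or> b \<in> P)"

definition maximal_ideal :: "'d::comm_ring_1 set \<Rightarrow> bool" where
  "maximal_ideal P \<longleftrightarrow> is_ideal P \<and> P \<noteq> UNIV \<and>
     (\<forall>I. is_ideal I \<and> P \<subseteq> I \<longrightarrow> I = P \<or> I = UNIV)"

definition ideal_gen :: "'d::comm_ring_1 set \<Rightarrow> 'd set" where
  "ideal_gen S = \<Inter>{I. is_ideal I \<and> S \<subseteq> I}"

primrec ideal_pow :: "'d::comm_ring_1 set \<Rightarrow> nat \<Rightarrow> 'd set" where
  "ideal_pow P 0 = UNIV"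
| "ideal_pow P (Suc n) = ideal_gen {x * y | x y. x \<in> P \<and> y \<in> ideal_pow P n}"

definition residue_char_zero :: "'d::comm_ring_1 set \<Rightarrow> bool" where
  "residue_char_zero P \<longleftrightarrow> (\<forall>n::nat. n > 0 \<longrightarrow> of_nat n \<notin> P)"

definition noetherian_ring :: "'d::comm_ring_1 itself \<Rightarrow> bool" where
  "noetherian_ring _ \<longleftrightarrow> (\<forall>I::'d set. is_ideal I \<longrightarrow> (\<exists>S. finite S \<and> ideal_gen S = I))"

text \<open>Integrally closed in the field of fractions, with denominators cleared:
  if \<open>x/y\<close> (\<open>y \<noteq> 0\<close>) is a root of a monic polynomial over \<open>D\<close>, then \<open>x/y \<in> D\<close>.\<close>
definition integrally_closed :: "'d::idom itself \<Rightarrow> bool" where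
  "integrally_closed _ \<longleftrightarrow>
     (\<forall>x y :: 'd. \<forall>n::nat. \<forall>c :: nat \<Rightarrow> 'd.
        y \<noteq> 0 \<and> n > 0 \<and> x ^ n + (\<Sum>i<n. c i * x ^ i * y ^ (n - i)) = 0 \<longrightarrow> y dvd x)"

text \<open>Dedekind domain: Noetherian, integrally closed domain of Krull dimension one
  (nonzero primes are maximal, and the ring is not a field).\<close>
definition dedekind_domain :: "'d::idom itself \<Rightarrow> bool" where
  "dedekind_domain T \<longleftrightarrow> noetherian_ring T \<and> integrally_closed T \<and>
     (\<forall>P::'d set. prime_ideal P \<and> P \<noteq> {0} \<longrightarrow> maximal_ideal P) \<and>
     (\<exists>P::'d set. prime_ideal P \<and> P \<noteq> {0})"

definition DG_module ::
  "('d::comm_ring_1 \<Rightarrow> 'a::ab_group_add \<Rightarrow> 'a) \<Rightarrow> ('g, 'm) monoid_scheme \<Rightarrow> ('g \<Rightarrow> 'a \<Rightarrow> 'a) \<Rightarrow> bool" where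
  "DG_module scale G \<rho> \<longleftrightarrow> module scale \<and> group G \<and>
     (\<forall>g\<in>carrier G. \<forall>a b. \<rho> g (a + b) = \<rho> g a + \<rho> g b) \<and>
     (\<forall>g\<in>carrier G. \<forall>d a. \<rho> g (scale d a) = scale d (\<rho> g a)) \<and>
     (\<forall>a. \<rho> \<one>\<^bsub>G\<^esub> a = a) \<and>
     (\<forall>g\<in>carrier G. \<forall>h\<in>carrier G. \<forall>a. \<rho> (g \<otimes>\<^bsub>G\<^esub> h) a = \<rho> g (\<rho> h a))"

definition DG_submodule ::
  "('d::comm_ring_1 \<Rightarrow> 'a::ab_group_add \<Rightarrow> 'a) \<Rightarrow> ('g, 'm) monoid_scheme \<Rightarrow> ('g \<Rightarrow> 'a \<Rightarrow> 'a) \<Rightarrow> 'a set \<Rightarrow> bool" where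
  "DG_submodule scale G \<rho> B \<longleftrightarrow> module.subspace scale B \<and> (\<forall>g\<in>carrier G. \<forall>b\<in>B. \<rho> g b \<in> B)"

definition DG_span ::
  "('d::comm_ring_1 \<Rightarrow> 'a::ab_group_add \<Rightarrow> 'a) \<Rightarrow> ('g, 'm) monoid_scheme \<Rightarrow> ('g \<Rightarrow> 'a \<Rightarrow> 'a) \<Rightarrow> 'a set \<Rightarrow> 'a set" where
  "DG_span scale G \<rho> S = \<Inter>{B. DG_submodule scale G \<rho> B \<and> S \<subseteq> B}"

definition DG_fin_gen ::
  "('d::comm_ring_1 \<Rightarrow> 'a::ab_group_add \<Rightarrow> 'a) \<Rightarrow> ('g, 'm) monoid_scheme \<Rightarrow> ('g \<Rightarrow> 'a \<Rightarrow> 'a) \<Rightarrow> 'a set \<Rightarrow> bool" where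
  "DG_fin_gen scale G \<rho> B \<longleftrightarrow> DG_submodule scale G \<rho> B \<and> (\<exists>S. finite S \<and> DG_span scale G \<rho> S = B)"

definition DG_minimal_gen ::
  "('d::comm_ring_1 \<Rightarrow> 'a::ab_group_add \<Rightarrow> 'a) \<Rightarrow> ('g, 'm) monoid_scheme \<Rightarrow> ('g \<Rightarrow> 'a \<Rightarrow> 'a) \<Rightarrow> 'a set \<Rightarrow> 'a set \<Rightarrow> bool" where
  "DG_minimal_gen scale G \<rho> S B \<longleftrightarrow> DG_span scale G \<rho> S = B \<and> (\<forall>T. T \<subset> S \<longrightarrow> DG_span scale G \<rho> T \<noteq> B)"

definition sr_DG_eq ::
  "('d::comm_ring_1 \<Rightarrow> 'a::ab_group_add \<Rightarrow> 'a) \<Rightarrow> ('g, 'm) monoid_scheme \<Rightarrow> ('g \<Rightarrow> 'a \<Rightarrow> 'a) \<Rightarrow> nat \<Rightarrow> bool" where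
  "sr_DG_eq scale G \<rho> r \<longleftrightarrow>
     (\<forall>B. DG_fin_gen scale G \<rho> B \<longrightarrow> (\<exists>S. finite S \<and> card S \<le> r \<and> DG_span scale G \<rho> S = B)) \<and>
     (\<exists>B S. DG_fin_gen scale G \<rho> B \<and> DG_minimal_gen scale G \<rho> S B \<and> finite S \<and> card S = r)"

definition P_module :: "('d::comm_ring_1 \<Rightarrow> 'a::ab_group_add \<Rightarrow> 'a) \<Rightarrow> 'd set \<Rightarrow> bool" where
  "P_module scale P \<longleftrightarrow> (\<forall>a. \<exists>n. \<forall>x\<in>ideal_pow P n. scale x a = 0)"

definition artinian_module :: "('d::comm_ring_1 \<Rightarrow> 'a::ab_group_add \<Rightarrow> 'a) \<Rightarrow> bool" where
  "artinian_module scale \<longleftrightarrow>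
     (\<forall>M :: nat \<Rightarrow> 'a set. (\<forall>n. module.subspace scale (M n) \<and> M (Suc n) \<subseteq> M n) \<longrightarrow>
        (\<exists>N. \<forall>n\<ge>N. M n = M N))"

end

theory Submission
  imports Defs
begin

lemma ideal_mem_mult: "is_ideal I \<Longrightarrow> x \<in> I \<Longrightarrow> r * x \<in> I"
  unfolding is_ideal_def by blast
lemma ideal_mem_mult2: "is_ideal I \<Longrightarrow> x \<in> I \<Longrightarrow> x * r \<in> I"
  unfolding is_ideal_def by (metis mult.commute)
lemma ideal_add: "is_ideal I \<Longrightarrow> x \<in> I \<Longrightarrow> y \<in> I \<Longrightarrow> x + y \<in> I"
  unfolding is_ideal_def by blast
lemma ideal_zero: "is_ideal I \<Longrightarrow> 0 \<in> I"
  unfolding is_ideal_def by blast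
lemma ideal_one: "is_ideal I \<Longrightarrow> I \<noteq> UNIV \<Longrightarrow> (1::'d::comm_ring_1) \<notin> I"
  using ideal_mem_mult2[of I 1] by auto

lemma ideal_gen_sub: "S \<subseteq> ideal_gen S"
  unfolding ideal_gen_def by blast
lemma ideal_gen_least: "is_ideal J \<Longrightarrow> S \<subseteq> J \<Longrightarrow> ideal_gen S \<subseteq> J"
  unfolding ideal_gen_def by blast
lemma ideal_gen_ideal: "is_ideal (ideal_gen S)"
  unfolding ideal_gen_def is_ideal_def by blast

lemma max_inv:
  fixes P :: "'d::comm_ring_1 set"
  assumes "maximal_ideal P" "x \<notin> P"
  shows "\<exists>p e. p \<in> P \<and> 1 = p + x * e"
proof -
  define Q where "Q = {p + x * e | p e. p \<in> P}"
  have iP: "is_ideal P" using assms unfolding maximal_ideal_def by blast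
  have "is_ideal Q" unfolding is_ideal_def Q_def
  proof (intro conjI ballI allI)
    show "0 \<in> {p + x * e |p e. p \<in> P}" using ideal_zero[OF iP] by (intro CollectI exI[of _ 0] exI[of _ 0]) simp
  next
    fix u v assume "u \<in> {p + x * e |p e. p \<in> P}" "v \<in> {p + x * e |p e. p \<in> P}"
    then obtain p1 e1 p2 e2 where "u = p1 + x*e1" "v = p2 + x * e2" "p1 \<in> P" "p2 \<in> P" by blast
    then have "u + v = (p1+p2) + x*(e1+e2)" "p1+p2 \<in> P" by (simp_all add: algebra_simps ideal_add[OF iP])
    then show "u + v \<in> {p + x * e |p e. p \<in> P}" by blast
  next
    fix r u assume "u \<in> {p + x * e |p e. p \<in> P}"
    then obtain p1 e1 where "u = p1 + x*e1" "p1 \<in> P" by blast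
    then have "r * u = r*p1 + x*(r*e1)" "r*p1 \<in> P" by (simp_all add: algebra_simps ideal_mem_mult[OF iP] ideal_mem_mult2[OF iP])
    then show "r * u \<in> {p + x * e |p e. p \<in> P}" by blast
  qed
  moreover have "P \<subseteq> Q" unfolding Q_def
  proof
    fix p assume "p \<in> P" then show "p \<in> {p + x * e |p e. p \<in> P}" by (intro CollectI exI[of _ p] exI[of _ 0]) simp
  qed
  moreover have "x \<in> Q" unfolding Q_def using ideal_zero[OF iP] by (intro CollectI exI[of _ 0] exI[of _ 1]) simp
  ultimately have "Q = UNIV" using assms unfolding maximal_ideal_def by blast
  then show ?thesis unfolding Q_def by blast
qed

lemma max_prime:
  fixes P :: "'d::comm_ring_1 set"
  assumes "maximal_ideal P" "x * y \<in> P" "x \<notin> P"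
  shows "y \<in> P"
proof -
  have iP: "is_ideal P" using assms unfolding maximal_ideal_def by blast
  obtain p e where "p \<in> P" "1 = p + x * e" using max_inv[OF assms(1,3)] by blast
  then have "y = p * y + e * (x * y)" by (metis mult_1 distrib_right mult.commute mult.left_commute)
  then show ?thesis using ideal_add[OF iP] ideal_mem_mult[OF iP] ideal_mem_mult2[OF iP] \<open>p\<in>P\<close> assms(2)
    by metis
qed

lemma max_prime2:
  fixes P :: "'d::comm_ring_1 set"
  assumes "maximal_ideal P" "x \<notin> P" "y \<notin> P"
  shows "x * y \<notin> P"
  using max_prime[OF assms(1) _ assms(2)] assms(3) by blast

lemma sum_shift_pow:
  fixes a :: "'a::comm_semiring_1"
  shows "a * (\<Sum>i\<le>k. f i * a^(k-i)) = (\<Sum>i\<le>k. f i * a^(Suc k - i))"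
  unfolding sum_distrib_left
proof (rule sum.cong[OF refl])
  fix i assume "i \<in> {..k}"
  then have "Suc k - i = Suc (k - i)" by (simp add: Suc_diff_le)
  then show "a * (f i * a ^ (k - i)) = f i * a ^ (Suc k - i)" by (simp add: ac_simps)
qed

lemma local_principal:
  fixes P :: "'d::idom set"
  assumes ded: "dedekind_domain TYPE('d)" and mP: "maximal_ideal P"
  shows "\<exists>\<pi>\<in>P. \<forall>x\<in>P. \<exists>s d. s \<notin> P \<and> s * x = d * \<pi>"
proof (cases "P = {0}")
  case True
  have "(1::'d) \<notin> P" using True by simp
  then show ?thesis using True by (intro bexI[of _ 0]) (auto intro!: exI[of _ 1])
next
  case False
  have iP: "is_ideal P" and PU: "P \<noteq> UNIV" using mP unfolding maximal_ideal_def by blast+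
  have P0: "0 \<in> P" using ideal_zero[OF iP] .
  obtain a where aP: "a \<in> P" and a0: "a \<noteq> 0" using False P0 by blast
  have noeth: "\<And>I::'d set. is_ideal I \<Longrightarrow> \<exists>S. finite S \<and> ideal_gen S = I"
    using ded unfolding dedekind_domain_def noetherian_ring_def by blast
  have ic: "integrally_closed TYPE('d)" using ded unfolding dedekind_domain_def by blast
  have dmax: "\<And>Q::'d set. prime_ideal Q \<Longrightarrow> Q \<noteq> {0} \<Longrightarrow> maximal_ideal Q"
    using ded unfolding dedekind_domain_def by blast
  have nP1: "(1::'d) \<notin> P" using ideal_one[OF iP PU] .
  define I where "I = {y. \<exists>s c. s \<notin> P \<and> s * y = a * c}"
  have iI: "is_ideal I" unfolding is_ideal_def
  proof (intro conjI ballI allI)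
    show "0 \<in> I" unfolding I_def using nP1 by (intro CollectI exI[of _ 1] exI[of _ 0]) simp
  next
    fix x y assume "x \<in> I" "y \<in> I"
    then obtain s1 c1 s2 c2 where h: "s1 \<notin> P" "s1 * x = a * c1" "s2 \<notin> P" "s2 * y = a * c2"
      unfolding I_def by blast
    have "(s1*s2) * (x+y) = a * (s2*c1 + s1*c2)" using h
      by (simp add: algebra_simps)
    moreover have "s1*s2 \<notin> P" using max_prime2[OF mP h(1,3)] .
    ultimately show "x + y \<in> I" unfolding I_def by blast
  next
    fix r x assume "x \<in> I"
    then obtain s c where h: "s \<notin> P" "s * x = a * c" unfolding I_def by blast
    have "s * (r * x) = a * (r * c)" using h by (metis mult.left_commute)
    then show "r * x \<in> I" unfolding I_def using h(1) by blast
  qed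
  have oneI: "(1::'d) \<notin> I"
  proof
    assume "1 \<in> I"
    then obtain s c where "s \<notin> P" "s * 1 = a * c" unfolding I_def by blast
    then show False using ideal_mem_mult2[OF iP aP] by simp
  qed
  have aI: "a \<in> I" unfolding I_def using nP1 by (intro CollectI exI[of _ 1] exI[of _ 1]) simp
  define col where "col c = {z. c * z \<in> I}" for c
  have icol: "is_ideal (col c)" for c unfolding is_ideal_def col_def
    using ideal_zero[OF iI] ideal_add[OF iI] ideal_mem_mult[OF iI]
    by (auto simp: distrib_left mult.left_commute)
  define F where "F = {col c | c. c \<notin> I}"
  have "\<exists>M\<in>F. \<forall>X\<in>F. M \<subseteq> X \<longrightarrow> X = M"
  proof (rule subset_Zorn_nonempty)
    show "F \<noteq> {}" unfolding F_def using oneI by blast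
  next
    fix C assume Cne: "C \<noteq> {}" and ch: "subset.chain F C"
    have CF: "C \<subseteq> F" and cmp: "\<forall>X\<in>C. \<forall>Y\<in>C. X \<subseteq> Y \<or> Y \<subseteq> X"
      using ch unfolding subset_chain_def by blast+
    have Cid: "is_ideal X" if "X \<in> C" for X using CF that icol unfolding F_def by blast
    have "is_ideal (\<Union>C)" unfolding is_ideal_def
    proof (intro conjI ballI allI)
      show "0 \<in> \<Union>C" using Cne Cid ideal_zero by blast
    next
      fix x y assume "x \<in> \<Union>C" "y \<in> \<Union>C"
      then obtain X Y where "X \<in> C" "Y \<in> C" "x \<in> X" "y \<in> Y" by blast
      then show "x + y \<in> \<Union>C" using cmp Cid ideal_add by (metis UnionI subsetD)
    next
      fix r x assume "x \<in> \<Union>C"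
      then show "r * x \<in> \<Union>C" using Cid ideal_mem_mult by blast
    qed
    then obtain S where S: "finite S" "ideal_gen S = \<Union>C" using noeth by blast
    then have "S \<subseteq> \<Union>C" using ideal_gen_sub by blast
    then obtain B where B: "B \<in> C" "S \<subseteq> B" using finite_subset_Union_chain[OF S(1) _ Cne ch] by blast
    then have "\<Union>C \<subseteq> B" using ideal_gen_least[OF Cid[OF B(1)]] S(2) by blast
    then have "\<Union>C = B" using B(1) by blast
    then show "\<Union>C \<in> F" using B(1) CF by blast
  qed
  then obtain b where bI: "b \<notin> I" and bmax: "\<forall>X\<in>F. col b \<subseteq> X \<longrightarrow> X = col b"
    unfolding F_def by blast
  have b0: "b \<noteq> 0" using bI ideal_zero[OF iI] by blast
  have colbP: "col b = P"
  proof -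
    have ne: "col b \<noteq> UNIV" using bI unfolding col_def by (metis UNIV_I mem_Collect_eq mult_1_right)
    have pr: "prime_ideal (col b)" unfolding prime_ideal_def
    proof (intro conjI icol ne allI impI)
      fix u v assume uv: "u * v \<in> col b"
      show "u \<in> col b \<or> v \<in> col b"
      proof (rule ccontr)
        assume "\<not> (u \<in> col b \<or> v \<in> col b)"
        then have u: "u \<notin> col b" and v: "v \<notin> col b" by auto
        have "col (b*u) \<in> F" using u unfolding F_def col_def by auto
        moreover have "col b \<subseteq> col (b*u)"
        proof
          fix z assume "z \<in> col b" then have "u * (b*z) \<in> I" using ideal_mem_mult[OF iI] by (simp add: col_def)
          then show "z \<in> col (b*u)" by (simp add: col_def ac_simps)
        qed
        ultimately have "col (b*u) = col b" using bmax by blast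
        moreover have "v \<in> col (b*u)" using uv unfolding col_def by (simp add: mult.assoc)
        ultimately show False using v by blast
      qed
    qed
    have "a \<in> col b" unfolding col_def using ideal_mem_mult[OF iI aI] by simp
    then have "col b \<noteq> {0}" using a0 by blast
    then have mc: "maximal_ideal (col b)" using dmax pr by blast
    have "col b \<subseteq> P"
    proof
      fix z assume "z \<in> col b"
      then obtain s c where "s \<notin> P" "s * (b * z) = a * c" unfolding col_def I_def by blast
      show "z \<in> P"
      proof (rule ccontr)
        assume "z \<notin> P"
        then have "s * z \<notin> P" using max_prime2[OF mP \<open>s \<notin> P\<close>] by blast
        moreover have "(s * z) * b = a * c" using \<open>s * (b * z) = a * c\<close> by (simp add: ac_simps)
        ultimately show False using bI unfolding I_def by blast
      qed
    qed
    then show ?thesis using mc iP PU unfolding maximal_ideal_def by blast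
  qed
  then have bP: "\<And>y. y \<in> P \<Longrightarrow> \<exists>s c. s \<notin> P \<and> s * (b * y) = a * c"
    unfolding col_def I_def by blast
  show ?thesis
  proof (cases "\<exists>y\<in>P. \<exists>s c. s \<notin> P \<and> c \<notin> P \<and> s * (b * y) = a * c")
    case True
    then obtain y s c where y: "y \<in> P" "s \<notin> P" "c \<notin> P" "s * (b * y) = a * c" by blast
    show ?thesis
    proof (intro bexI[OF _ y(1)] ballI)
      fix z assume "z \<in> P"
      then obtain s' c' where h: "s' \<notin> P" "s' * (b * z) = a * c'" using bP by blast
      have "b * ((c * s') * z) = c * (s' * (b * z))" by (simp add: ac_simps)
      also have "\<dots> = c * (a * c')" using h by simp
      also have "\<dots> = c' * (s * (b * y))" using y(4) by (simp add: ac_simps)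
      also have "\<dots> = b * ((s * c') * y)" by (simp add: ac_simps)
      finally have "(c * s') * z = (s * c') * y" using b0 by simp
      moreover have "c * s' \<notin> P" using max_prime2[OF mP y(3) h(1)] .
      ultimately show "\<exists>s d. s \<notin> P \<and> s * z = d * y" by blast
    qed
  next
    case False
    then have H: "\<And>y s c. y \<in> P \<Longrightarrow> s \<notin> P \<Longrightarrow> s * (b * y) = a * c \<Longrightarrow> c \<in> P" by blast
    have wseq: "\<exists>t w. t \<notin> P \<and> w \<in> P \<and> t * b^k * a = a^k * w" for k
    proof (induction k)
      case 0
      show ?case using nP1 aP by (intro exI[of _ 1] exI[of _ a]) simp
    next
      case (Suc k)
      then obtain t w where tw: "t \<notin> P" "w \<in> P" "t * b^k * a = a^k * w" by blast
      obtain s c where sc: "s \<notin> P" "s * (b * w) = a * c" using bP[OF tw(2)] by blast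
      have cP: "c \<in> P" using H[OF tw(2) sc] .
      have "(s * t) * b^(Suc k) * a = s * b * (t * b^k * a)" by (simp add: ac_simps)
      also have "\<dots> = a^k * (s * (b * w))" using tw(3) by (simp add: ac_simps)
      also have "\<dots> = a^(Suc k) * c" using sc(2) by (simp add: ac_simps)
      finally show ?case using max_prime2[OF mP sc(1) tw(1)] cP by blast
    qed
    define L where "L k = {z. \<exists>t d. t \<notin> P \<and> t * z * a^k = a * (\<Sum>i\<le>k. d i * b^i * a^(k-i))}" for k
    have iL: "is_ideal (L k)" for k unfolding is_ideal_def
    proof (intro conjI ballI allI)
      show "0 \<in> L k" unfolding L_def using nP1 by (intro CollectI exI[of _ 1] exI[of _ "\<lambda>_. 0"]) simp
    next
      fix x y assume "x \<in> L k" "y \<in> L k"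
      then obtain t1 d1 t2 d2 where h: "t1 \<notin> P" "t1 * x * a^k = a * (\<Sum>i\<le>k. d1 i * b^i * a^(k-i))"
        "t2 \<notin> P" "t2 * y * a^k = a * (\<Sum>i\<le>k. d2 i * b^i * a^(k-i))" unfolding L_def by blast
      have "(t1*t2) * (x+y) * a^k = t2 * (t1 * x * a^k) + t1 * (t2 * y * a^k)" by (simp add: algebra_simps)
      also have "\<dots> = a * (\<Sum>i\<le>k. (t2 * d1 i + t1 * d2 i) * b^i * a^(k-i))"
        using h by (simp add: sum_distrib_left sum.distrib algebra_simps)
      finally have eq: "(t1*t2) * (x+y) * a^k = a * (\<Sum>i\<le>k. (t2 * d1 i + t1 * d2 i) * b^i * a^(k-i))" .
      show "x + y \<in> L k" unfolding L_def using max_prime2[OF mP h(1,3)] eq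
        by (intro CollectI exI[of _ "t1*t2"] exI[of _ "\<lambda>i. t2 * d1 i + t1 * d2 i"]) simp
    next
      fix r x assume "x \<in> L k"
      then obtain t d where h: "t \<notin> P" "t * x * a^k = a * (\<Sum>i\<le>k. d i * b^i * a^(k-i))"
        unfolding L_def by blast
      have "t * (r * x) * a^k = r * (t * x * a^k)" by (simp add: ac_simps)
      also have "\<dots> = a * (\<Sum>i\<le>k. (r * d i) * b^i * a^(k-i))"
        using h by (simp add: sum_distrib_left algebra_simps)
      finally have eq: "t * (r * x) * a^k = a * (\<Sum>i\<le>k. (r * d i) * b^i * a^(k-i))" .
      show "r * x \<in> L k" unfolding L_def using h(1) eq
        by (intro CollectI exI[of _ "t"] exI[of _ "\<lambda>i. r * d i"]) simp
    qed
    have Lsuc: "L k \<subseteq> L (Suc k)" for k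
    proof
      fix z assume "z \<in> L k"
      then obtain t d where h: "t \<notin> P" "t * z * a^k = a * (\<Sum>i\<le>k. d i * b^i * a^(k-i))"
        unfolding L_def by blast
      define d' where "d' i = (if i \<le> k then d i else 0)" for i
      have "t * z * a^(Suc k) = a * (\<Sum>i\<le>k. d i * b^i * a^(k-i)) * a" using h(2) by (simp add: ac_simps)
      also have "\<dots> = a * (a * (\<Sum>i\<le>k. (d i * b^i) * a^(k-i)))" by (simp add: ac_simps)
      also have "\<dots> = a * (\<Sum>i\<le>k. d i * b^i * a^(Suc k-i))"
        unfolding sum_shift_pow by simp
      also have "(\<Sum>i\<le>k. d i * b^i * a^(Suc k-i)) = (\<Sum>i\<le>Suc k. d' i * b^i * a^(Suc k-i))"
        by (simp add: d'_def)
      finally have eq: "t * z * a^(Suc k) = a * (\<Sum>i\<le>Suc k. d' i * b^i * a^(Suc k-i))" .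
      show "z \<in> L (Suc k)" unfolding L_def using h(1) eq
        by (intro CollectI exI[of _ "t"] exI[of _ d']) simp
    qed
    have Lmono: "k \<le> k' \<Longrightarrow> L k \<subseteq> L k'" for k k'
      by (induction k' rule: dec_induct) (use Lsuc in blast)+
    define U where "U = (\<Union>k. L k)"
    have iU: "is_ideal U" unfolding is_ideal_def U_def
    proof (intro conjI ballI allI)
      show "0 \<in> (\<Union>k. L k)" using ideal_zero[OF iL] by blast
    next
      fix x y assume "x \<in> (\<Union>k. L k)" "y \<in> (\<Union>k. L k)"
      then obtain k1 k2 where "x \<in> L k1" "y \<in> L k2" by blast
      then have "x \<in> L (max k1 k2)" "y \<in> L (max k1 k2)" using Lmono by (meson max.cobounded1 max.cobounded2 subsetD)+
      then show "x + y \<in> (\<Union>k. L k)" using ideal_add[OF iL] by blast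
    next
      fix r x assume "x \<in> (\<Union>k. L k)"
      then show "r * x \<in> (\<Union>k. L k)" using ideal_mem_mult[OF iL] by blast
    qed
    obtain S where S: "finite S" "ideal_gen S = U" using noeth[OF iU] by blast
    have "S \<subseteq> U" using S ideal_gen_sub by blast
    have "\<exists>K. S' \<subseteq> L K" if "finite S'" "S' \<subseteq> U" for S'
      using that
    proof (induction S' rule: finite_induct)
      case empty then show ?case by blast
    next
      case (insert x S')
      then obtain K k where "S' \<subseteq> L K" "x \<in> L k" unfolding U_def by blast
      then have "insert x S' \<subseteq> L (max K k)" using Lmono by (meson insert_subset max.cobounded1 max.cobounded2 subset_trans subsetD)
      then show ?case by blast
    qed
    then obtain K where "S \<subseteq> L K" using S(1) \<open>S \<subseteq> U\<close> by blast
    then have UK: "U \<subseteq> L K" using ideal_gen_least[OF iL] S(2) by blast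
    obtain t' w where tw: "t' \<notin> P" "w \<in> P" "t' * b^(Suc K) * a = a^(Suc K) * w" using wseq by blast
    have "w \<in> L (Suc K)"
    proof -
      define d where "d i = (if i = Suc K then t' else 0)" for i
      have "(\<Sum>i\<le>Suc K. d i * b^i * a^(Suc K-i)) = t' * b^(Suc K)" by (simp add: d_def)
      moreover have "1 * w * a^(Suc K) = a * (t' * b^(Suc K))"
      proof -
        have "1 * w * a^(Suc K) = a^(Suc K) * w" by simp
        also have "\<dots> = t' * b^(Suc K) * a" using tw(3) by (simp only: eq_commute)
        also have "\<dots> = a * (t' * b^(Suc K))" by (simp only: mult.commute)
        finally show ?thesis .
      qed
      ultimately have "1 * w * a^(Suc K) = a * (\<Sum>i\<le>Suc K. d i * b^i * a^(Suc K-i))" by simp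
      then show ?thesis unfolding L_def using nP1
        by (intro CollectI exI[of _ 1] exI[of _ d]) simp
    qed
    then have "w \<in> L K" using UK unfolding U_def by blast
    then obtain t d where td: "t \<notin> P" "t * w * a^K = a * (\<Sum>i\<le>K. d i * b^i * a^(K-i))"
      unfolding L_def by blast
    define T where "T = t * t'"
    have TP: "T \<notin> P" unfolding T_def using max_prime2[OF mP td(1) tw(1)] .
    have "a * (T * b^(Suc K)) = t * (t' * b^(Suc K) * a)" unfolding T_def by (simp add: ac_simps)
    also have "\<dots> = t * (a^(Suc K) * w)" by (simp only: tw(3))
    also have "\<dots> = a * (t * w * a^K)" by (simp add: ac_simps)
    also have "\<dots> = a * (a * (\<Sum>i\<le>K. d i * b^i * a^(K-i)))" using td(2) by simp
    finally have "T * b^(Suc K) = a * (\<Sum>i\<le>K. d i * b^i * a^(K-i))" using a0 by simp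
    also have "\<dots> = (\<Sum>i\<le>K. d i * b^i * a^(Suc K-i))"
      using sum_shift_pow[of a "\<lambda>i. d i * b^i" K] by simp
    finally have rel: "T * b^(Suc K) = (\<Sum>i\<le>K. d i * b^i * a^(Suc K-i))" .
    define c where "c i = - (d i * T^(K-i))" for i
    have "(\<Sum>i<Suc K. c i * (T*b)^i * a^(Suc K - i)) = - (\<Sum>i\<le>K. T^K * (d i * b^i * a^(Suc K-i)))"
    proof -
      have "(\<Sum>i<Suc K. c i * (T*b)^i * a^(Suc K - i)) = (\<Sum>i\<le>K. c i * (T*b)^i * a^(Suc K - i))"
        using lessThan_Suc_atMost by simp
      also have "\<dots> = (\<Sum>i\<le>K. - (T^K * (d i * b^i * a^(Suc K-i))))"
      proof (rule sum.cong[OF refl])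
        fix i assume "i \<in> {..K}"
        then have "T^(K-i) * T^i = T^K" by (simp add: power_add[symmetric])
        then show "c i * (T*b)^i * a^(Suc K - i) = - (T^K * (d i * b^i * a^(Suc K-i)))"
          unfolding c_def by (simp add: power_mult_distrib algebra_simps)
      qed
      finally show ?thesis by (simp add: sum_negf)
    qed
    also have "\<dots> = - (T^K * (T * b^(Suc K)))" using rel by (simp add: sum_distrib_left)
    also have "\<dots> = - ((T*b)^(Suc K))" by (simp add: power_mult_distrib ac_simps)
    finally have "(T*b)^(Suc K) + (\<Sum>i<Suc K. c i * (T*b)^i * a^(Suc K - i)) = 0" by simp
    then have "a dvd T * b" using ic a0 unfolding integrally_closed_def by blast
    then obtain e where "T * b = a * e" by (auto elim: dvdE)
    then have "b \<in> I" unfolding I_def using TP by blast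
    then show ?thesis using bI by blast
  qed
qed


lemma arr_stab:
  fixes e :: "nat \<Rightarrow> nat \<Rightarrow> nat"
  assumes "\<And>i n. e i n \<le> B" "\<And>i n. e (Suc i) n \<le> e i n" "\<And>i n. e i (Suc n) \<le> e i n"
  shows "\<exists>N. \<forall>i\<ge>N. \<forall>n. e i n = e N n"
  using assms
proof (induction B arbitrary: e)
  case 0
  then show ?case by (metis le_zero_eq)
next
  case (Suc B)
  have ai: "i \<le> i' \<Longrightarrow> e i' n \<le> e i n" for i i' n
    using lift_Suc_antimono_le[of "\<lambda>i. e i n"] Suc.prems(2) by blast
  have an: "n \<le> n' \<Longrightarrow> e i n' \<le> e i n" for i n n'
    using lift_Suc_antimono_le[of "\<lambda>n. e i n"] Suc.prems(3) by blast
  show ?case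
  proof (cases "\<forall>i n. e i n = Suc B")
    case True
    then show ?thesis by auto
  next
    case False
    then obtain i1 n1 where "e i1 n1 \<noteq> Suc B" by blast
    then have i1: "e i1 n1 \<le> B" using Suc.prems(1)[of i1 n1] by simp
    define t where "t i = (LEAST n. e i n \<le> B)" for i
    have tle: "e i (t i) \<le> B" if "i \<ge> i1" for i
      unfolding t_def by (rule LeastI[of _ n1]) (use ai[OF that, of n1] i1 in simp)
    have tlt: "n < t i \<Longrightarrow> e i n = Suc B" for i n
      unfolding t_def using not_less_Least[of n "\<lambda>n. e i n \<le> B"] Suc.prems(1)[of i n] by simp
    have tmono: "i1 \<le> i \<Longrightarrow> i \<le> i' \<Longrightarrow> t i' \<le> t i" for i i'
      unfolding t_def[of i'] by (rule Least_le) (use ai[of i i' "t i"] tle[of i] in simp)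
    define v where "v = (LEAST v. \<exists>i\<ge>i1. t i = v)"
    obtain i2 where i2: "i2 \<ge> i1" "t i2 = v"
      unfolding v_def using LeastI[of "\<lambda>v. \<exists>i\<ge>i1. t i = v" "t i1"] by blast
    have tst: "i \<ge> i2 \<Longrightarrow> t i = t i2" for i
    proof -
      assume "i \<ge> i2"
      then have "t i \<le> t i2" using tmono i2 by blast
      moreover have "v \<le> t i" unfolding v_def by (rule Least_le) (use \<open>i \<ge> i2\<close> i2 in \<open>auto intro: order_trans\<close>)
      ultimately show ?thesis using i2 by simp
    qed
    define e' where "e' i n = min (e i n) B" for i n
    have e1: "\<And>i n. e' i n \<le> B" "\<And>i n. e' (Suc i) n \<le> e' i n" "\<And>i n. e' i (Suc n) \<le> e' i n"
      unfolding e'_def using Suc.prems(2,3) by (auto simp: min_le_iff_disj)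
    have "\<exists>N. \<forall>i\<ge>N. \<forall>n. e' i n = e' N n" using Suc.IH[of e'] e1 by blast
    then obtain N' where N': "\<forall>i\<ge>N'. \<forall>n. e' i n = e' N' n" by blast
    define N where "N = max N' i2"
    have i1N: "i1 \<le> N" using i2 unfolding N_def by simp
    have "\<forall>i\<ge>N. \<forall>n. e i n = e N n"
    proof (intro allI impI)
      fix i n assume iN: "i \<ge> N"
      have ti: "t i = t N" using tst iN unfolding N_def by (metis max.cobounded2 order_trans)
      show "e i n = e N n"
      proof (cases "n < t N")
        case True
        then show ?thesis using tlt ti by metis
      next
        case False
        have "e i n \<le> B" using an[of "t i" n i] tle[of i] False ti iN i1N by simp
        moreover have "e N n \<le> B" using an[of "t N" n N] tle[of N] False i1N by simp
        moreover have "e' i n = e' N n" using N' iN unfolding N_def by (metis max.cobounded1 order_trans)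
        ultimately show ?thesis unfolding e'_def by simp
      qed
    qed
    then show ?thesis by blast
  qed
qed


locale pmod = module scale for scale :: "'d::idom \<Rightarrow> 'a::ab_group_add \<Rightarrow> 'a" +
  fixes P :: "'d set" and pi :: 'd and s0 :: nat
  assumes mP: "maximal_ideal P" and Pm: "P_module scale P" and piP: "pi \<in> P"
    and loc: "\<forall>x\<in>P. \<exists>s d. s \<notin> P \<and> s * x = d * pi"
    and fin: "\<forall>T. finite T \<and> T \<subseteq> {a. scale pi a = 0} \<longrightarrow>
       (\<exists>W. finite W \<and> card W \<le> s0 \<and> W \<subseteq> {a. scale pi a = 0} \<and> T \<subseteq> span W)"
begin

lemma iP: "is_ideal P" using mP unfolding maximal_ideal_def by blast

lemma pow_in: "p \<in> P \<Longrightarrow> p^n \<in> ideal_pow P n"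
proof (induction n)
  case 0 then show ?case by simp
next
  case (Suc n)
  then have pn: "p^n \<in> ideal_pow P n" by blast
  have "p * p^n \<in> {x * y | x y. x \<in> P \<and> y \<in> ideal_pow P n}"
    using Suc.prems pn by (intro CollectI exI[of _ p] exI[of _ "p^n"]) simp
  then have "p * p^n \<in> ideal_gen {x * y | x y. x \<in> P \<and> y \<in> ideal_pow P n}"
    using ideal_gen_sub[of "{x * y | x y. x \<in> P \<and> y \<in> ideal_pow P n}"] by (rule subsetD[rotated])
  then show ?case by (simp only: ideal_pow.simps power_Suc)
qed

lemma inv_act: "s \<notin> P \<Longrightarrow> \<exists>e. scale e (scale s a) = a"
proof -
  assume sP: "s \<notin> P"
  obtain n where n: "\<forall>x\<in>ideal_pow P n. scale x a = 0" using Pm unfolding P_module_def by blast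
  obtain p e0 where pe: "p \<in> P" "1 = p + s * e0" using max_inv[OF mP sP] by blast
  have "\<exists>e. 1 = p^k + s * e" for k
  proof (induction k)
    case 0 then show ?case by (intro exI[of _ 0]) simp
  next
    case (Suc k)
    then obtain e where "1 = p^k + s * e" by blast
    then have "1 = (p + s * e0) * (p^k + s * e)" using pe(2) by simp
    also have "\<dots> = p^(Suc k) + s * (e0 * p^k + p * e + s * e0 * e)" by (simp add: algebra_simps)
    finally show ?case by blast
  qed
  then obtain e where e: "1 = p^n + s * e" by blast
  have "a = scale (p^n + s * e) a" using e by simp
  also have "\<dots> = scale (p^n) a + scale e (scale s a)" by (simp add: scale_left_distrib mult.commute)
  also have "scale (p^n) a = 0" using n pow_in[OF pe(1)] by blast
  finally have "a = scale e (scale s a)" by simp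
  then show ?thesis by metis
qed

lemma act: "x \<in> P \<Longrightarrow> \<exists>d. scale x a = scale d (scale pi a)"
proof -
  assume "x \<in> P"
  then obtain s d where sd: "s \<notin> P" "s * x = d * pi" using loc by blast
  obtain e where e: "scale e (scale s a) = a" using inv_act[OF sd(1)] by blast
  have "scale x a = scale x (scale e (scale s a))" using e by simp
  also have "\<dots> = scale (e * (s * x)) a" by (simp add: ac_simps)
  also have "\<dots> = scale (e * d) (scale pi a)" using sd(2) by (simp add: ac_simps)
  finally show ?thesis by blast
qed

lemma tors: "\<exists>n. scale (pi^n) a = 0"
  using Pm pow_in[OF piP] unfolding P_module_def by blast

lemma kerP: "scale pi a = 0 \<Longrightarrow> x \<in> P \<Longrightarrow> scale x a = 0"
proof -
  assume "scale pi a = 0" "x \<in> P"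
  then obtain d where "scale x a = scale d (scale pi a)" using act by blast
  then show ?thesis using \<open>scale pi a = 0\<close> by simp
qed

lemma chain_mono:
  assumes "\<forall>i<m. c i \<subset> c (Suc i)" "i \<le> j" "j \<le> m"
  shows "c i \<subseteq> c j"
  using assms(2,3)
proof (induction j)
  case 0 then show ?case by simp
next
  case (Suc j)
  show ?case
  proof (cases "i = Suc j")
    case True then show ?thesis by simp
  next
    case False
    then have "c i \<subseteq> c j" using Suc by simp
    moreover have "c j \<subseteq> c (Suc j)" using assms(1) Suc.prems by (simp add: Suc_le_lessD psubset_imp_subset)
    ultimately show ?thesis by blast
  qed
qed

lemma two_level:
  assumes wP: "\<forall>x\<in>P. scale x w = 0" and x: "x \<in> span (insert w W)" "x \<notin> span W"
    and V: "subspace V" "x \<in> V" and y: "y \<in> span (insert w W)"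
  shows "\<exists>u\<in>V. y - u \<in> span W"
proof -
  obtain k where k: "x - scale k w \<in> span W" using x(1) span_insert by blast
  obtain k' where k': "y - scale k' w \<in> span W" using y span_insert by blast
  have kP: "k \<notin> P"
  proof
    assume "k \<in> P" then have "scale k w = 0" using wP by blast
    then show False using k x(2) by simp
  qed
  obtain p e where pe: "p \<in> P" "1 = p + k * e" using max_inv[OF mP kP] by blast
  have ww: "w = scale e (scale k w)"
  proof -
    have "w = scale (p + k * e) w" using pe(2) by simp
    also have "\<dots> = scale e (scale k w)" using wP pe(1) by (simp add: scale_left_distrib ac_simps)
    finally show ?thesis .
  qed
  define u where "u = scale (k' * e) x"
  have "u \<in> V" unfolding u_def using V subspace_scale by blast
  have "y - u = (y - scale k' w) - scale (k' * e) (x - scale k w)"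
  proof -
    have h: "scale (k' * e) (scale k w) = scale k' w"
    proof -
      have "scale (k' * e) (scale k w) = scale k' (scale e (scale k w))" by (simp add: ac_simps)
      also have "\<dots> = scale k' w" using ww by simp
      finally show ?thesis .
    qed
    show ?thesis unfolding u_def scale_right_diff_distrib h by (simp add: algebra_simps)
  qed
  also have "\<dots> \<in> span W" using k k' span_diff span_scale by blast
  finally show ?thesis using \<open>u \<in> V\<close> by blast
qed

lemma CL:
  "finite W \<Longrightarrow> \<forall>w\<in>W. \<forall>x\<in>P. scale x w = 0 \<Longrightarrow> \<forall>i\<le>m. subspace (c i) \<Longrightarrow>
   \<forall>i<m. c i \<subset> c (Suc i) \<Longrightarrow> c m \<subseteq> span W \<Longrightarrow> m \<le> card W"
proof (induction W arbitrary: m c rule: finite_induct)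
  case empty
  show ?case
  proof (rule ccontr)
    assume "\<not> m \<le> card {}"
    then have m: "0 < m" by simp
    have "c 1 \<subseteq> c m" using chain_mono[OF empty.prems(3)] m by simp
    then have "c 1 \<subseteq> {0}" using empty.prems(4) by simp
    moreover have "0 \<in> c 0" using subspace_0 empty.prems(2) by simp
    moreover have "c 0 \<subset> c 1" using empty.prems(3) m by simp
    ultimately show False by blast
  qed
next
  case (insert w W)
  note wP = insert.prems(1)
  note sub = insert.prems(2)
  note str = insert.prems(3)
  note top = insert.prems(4)
  show ?case
  proof (cases "m = 0")
    case True then show ?thesis by simp
  next
    case False
    define N where "N = span W"
    define d where "d i = c i \<inter> N" for i
    have dsub: "d l \<subseteq> d (Suc l)" if "l < m" for l using str that unfolding d_def by blast
    have uniq: "l1 = l2" if b1: "l1 < m" "d l1 = d (Suc l1)" and b2: "l2 < m" "d l2 = d (Suc l2)" for l1 l2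
    proof -
      have gen: False if b1: "l1 < m" "d l1 = d (Suc l1)" and b2: "l2 < m" "d l2 = d (Suc l2)" and lt: "l1 < l2" for l1 l2
      proof -
        obtain x where x: "x \<in> c (Suc l1)" "x \<notin> c l1" using str b1(1) by blast
        have xN: "x \<notin> N" using x b1(2) unfolding d_def by blast
        have xs: "x \<in> span (insert w W)" using chain_mono[OF str, of "Suc l1" m] b1(1) x(1) top by auto
        obtain y where y: "y \<in> c (Suc l2)" "y \<notin> c l2" using str b2(1) by blast
        have ys: "y \<in> span (insert w W)" using chain_mono[OF str, of "Suc l2" m] b2(1) y(1) top by auto
        have wP': "\<forall>x\<in>P. scale x w = 0" using wP by simp
        obtain u where u: "u \<in> c (Suc l1)" "y - u \<in> N"
          using two_level[OF wP' xs xN[unfolded N_def] _ x(1) ys] sub b1(1) unfolding N_def by auto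
        have "u \<in> c l2" using chain_mono[OF str, of "Suc l1" l2] lt b2(1) u(1) by auto
        then have "u \<in> c (Suc l2)" using str b2(1) by blast
        then have "y - u \<in> c (Suc l2)" using subspace_diff sub b2(1) y(1) by simp
        then have "y - u \<in> c l2" using u(2) b2(2) unfolding d_def by blast
        then have "(y - u) + u \<in> c l2" using subspace_add[of "c l2" "y - u" u] sub b2(1) \<open>u \<in> c l2\<close> by simp
        then show False using y(2) by simp
      qed
      show ?thesis
      proof (rule ccontr)
        assume "l1 \<noteq> l2"
        then have "l1 < l2 \<or> l2 < l1" by arith
        then show False using gen b1 b2 by metis
      qed
    qed
    define j where "j = (if \<exists>l. l < m \<and> d l = d (Suc l) then (SOME l. l < m \<and> d l = d (Suc l)) else 0)"
    have good: "d l \<subset> d (Suc l)" if "l < m" "l \<noteq> j" for l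
    proof -
      have "d l \<noteq> d (Suc l)"
      proof
        assume bad: "d l = d (Suc l)"
        then have ex: "\<exists>l. l < m \<and> d l = d (Suc l)" using that by blast
        then have "j < m \<and> d j = d (Suc j)" unfolding j_def using someI_ex[OF ex] by simp
        then show False using uniq[of l j] that bad by blast
      qed
      then show ?thesis using dsub that by blast
    qed
    define c' where "c' i = d (if i < j then i else Suc i)" for i
    have "m - 1 \<le> card W"
    proof (rule insert.IH[of "m - 1" c'])
      show "\<forall>w\<in>W. \<forall>x\<in>P. scale x w = 0" using wP by simp
      show "\<forall>i\<le>m - 1. subspace (c' i)"
      proof (intro allI impI)
        fix i assume "i \<le> m - 1"
        then have "(if i < j then i else Suc i) \<le> m" using False by auto
        then show "subspace (c' i)" unfolding c'_def d_def N_def using sub by (intro subspace_inter) auto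
      qed
      show "\<forall>i<m - 1. c' i \<subset> c' (Suc i)"
      proof (intro allI impI)
        fix i assume i: "i < m - 1"
        show "c' i \<subset> c' (Suc i)"
        proof (cases "Suc i < j")
          case True
          then show ?thesis unfolding c'_def using good[of i] i by simp
        next
          case F2: False
          show ?thesis
          proof (cases "i < j")
            case True
            then have "j = Suc i" using F2 by simp
            then have "c' i = d i" "c' (Suc i) = d (Suc (Suc i))" unfolding c'_def by simp_all
            moreover have "d i \<subset> d (Suc i)" using good[of i] i \<open>j = Suc i\<close> by simp
            moreover have "d (Suc i) \<subseteq> d (Suc (Suc i))" using dsub[of "Suc i"] i by simp
            ultimately show ?thesis by blast
          next
            case False
            then have "c' i = d (Suc i)" "c' (Suc i) = d (Suc (Suc i))" using F2 unfolding c'_def by simp_all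
            moreover have "d (Suc i) \<subset> d (Suc (Suc i))" using good[of "Suc i"] i False by simp
            ultimately show ?thesis by simp
          qed
        qed
      qed
      show "c' (m - 1) \<subseteq> span W" unfolding c'_def d_def N_def by blast
    qed
    then show ?thesis using insert.hyps by simp
  qed
qed

definition chain_len :: "'a set \<Rightarrow> nat \<Rightarrow> bool" where
  "chain_len V m \<longleftrightarrow> (\<exists>c. (\<forall>i\<le>m. subspace (c i)) \<and> (\<forall>i<m. c i \<subset> c (Suc i)) \<and> c m \<subseteq> V)"

definition ht :: "'a set \<Rightarrow> nat" where "ht V = (GREATEST m. chain_len V m)"

definition Kset where "Kset = {a. scale pi a = 0}"

lemma bound:
  assumes VK: "V \<subseteq> Kset" and cl: "chain_len V m"
  shows "m \<le> s0"
proof -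
  obtain c where c: "\<forall>i\<le>m. subspace (c i)" "\<forall>i<m. c i \<subset> c (Suc i)" "c m \<subseteq> V"
    using cl unfolding chain_len_def by blast
  define v where "v i = (SOME x. x \<in> c (Suc i) \<and> x \<notin> c i)" for i
  have v: "\<forall>i<m. v i \<in> c (Suc i) \<and> v i \<notin> c i"
  proof (intro allI impI)
    fix i assume "i < m"
    then have "\<exists>x. x \<in> c (Suc i) \<and> x \<notin> c i" using c(2) by blast
    then show "v i \<in> c (Suc i) \<and> v i \<notin> c i" unfolding v_def by (rule someI_ex)
  qed
  define T where "T = v ` {..<m}"
  have TK: "T \<subseteq> Kset"
  proof
    fix x assume "x \<in> T"
    then obtain i where i: "i < m" "x = v i" unfolding T_def by blast
    then have "x \<in> c (Suc i)" using v by blast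
    moreover have "c (Suc i) \<subseteq> c m" using chain_mono[OF c(2), of "Suc i" m] i by simp
    ultimately show "x \<in> Kset" using c(3) VK by blast
  qed
  have "finite T" unfolding T_def by simp
  then obtain W where W: "finite W" "card W \<le> s0" "W \<subseteq> Kset" "T \<subseteq> span W"
    using fin[rule_format, of T] TK unfolding Kset_def by blast
  define c' where "c' i = c i \<inter> span W" for i
  have "m \<le> card W"
  proof (rule CL[of W m c'])
    show "finite W" by fact
    show "\<forall>w\<in>W. \<forall>x\<in>P. scale x w = 0" using W(3) kerP unfolding Kset_def by blast
    show "\<forall>i\<le>m. subspace (c' i)" unfolding c'_def using c(1) by (simp add: subspace_inter)
    show "\<forall>i<m. c' i \<subset> c' (Suc i)"
    proof (intro allI impI)
      fix i assume i: "i < m"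
      have "v i \<in> span W" using W(4) i unfolding T_def by blast
      then have "v i \<in> c' (Suc i)" "v i \<notin> c' i" using v i unfolding c'_def by auto
      moreover have "c' i \<subseteq> c' (Suc i)" using c(2) i unfolding c'_def by blast
      ultimately show "c' i \<subset> c' (Suc i)" by blast
    qed
    show "c' m \<subseteq> span W" unfolding c'_def by blast
  qed
  then show ?thesis using W(2) by simp
qed

lemma chain_len0: "subspace V \<Longrightarrow> chain_len V 0"
  unfolding chain_len_def by (intro exI[of _ "\<lambda>_. V"]) simp

lemma ht_props:
  assumes "subspace V" "V \<subseteq> Kset"
  shows "chain_len V (ht V)" "ht V \<le> s0"
proof -
  show "chain_len V (ht V)" unfolding ht_def
    by (rule GreatestI_nat[where P="chain_len V", OF chain_len0[OF assms(1)]]) (use bound assms in blast)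
  then show "ht V \<le> s0" using bound assms by blast
qed

lemma ht_mono:
  assumes "V \<subseteq> V'" "subspace V" "subspace V'" "V' \<subseteq> Kset"
  shows "ht V \<le> ht V'"
proof -
  have "chain_len V (ht V)" using ht_props assms by blast
  then have "chain_len V' (ht V)" using assms(1) unfolding chain_len_def by blast
  then show ?thesis unfolding ht_def[of V'] by (rule Greatest_le_nat[where P="chain_len V'"]) (use bound assms in blast)
qed

lemma ht_strict:
  assumes "V \<subset> V'" "subspace V" "subspace V'" "V' \<subseteq> Kset"
  shows "ht V < ht V'"
proof -
  have "chain_len V (ht V)" using ht_props assms by blast
  then obtain c where c: "\<forall>i\<le>ht V. subspace (c i)" "\<forall>i<ht V. c i \<subset> c (Suc i)" "c (ht V) \<subseteq> V"
    unfolding chain_len_def by blast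
  define c' where "c' = c(Suc (ht V) := V')"
  have "chain_len V' (Suc (ht V))" unfolding chain_len_def
  proof (intro exI[of _ c'] conjI allI impI)
    fix i assume "i \<le> Suc (ht V)"
    then show "subspace (c' i)" unfolding c'_def using c(1) assms(3) by (cases "i = Suc (ht V)") auto
  next
    fix i assume i: "i < Suc (ht V)"
    show "c' i \<subset> c' (Suc i)"
    proof (cases "i = ht V")
      case True then show ?thesis unfolding c'_def using c(3) assms(1) by auto
    next
      case False then show ?thesis unfolding c'_def using c(2) i by auto
    qed
  next
    show "c' (Suc (ht V)) \<subseteq> V'" unfolding c'_def by simp
  qed
  then have "Suc (ht V) \<le> ht V'" unfolding ht_def[of V'] by (rule Greatest_le_nat[where P="chain_len V'"]) (use bound assms in blast)
  then show ?thesis by simp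
qed

definition Vn :: "nat \<Rightarrow> 'a set \<Rightarrow> 'a set" where
  "Vn n M = {scale (pi^n) m | m. m \<in> M \<and> scale (pi^(Suc n)) m = 0}"

lemma Vn_K: "Vn n M \<subseteq> Kset"
  unfolding Vn_def Kset_def by (auto simp: mult.commute)

lemma Vn_sub:
  assumes "subspace M" shows "subspace (Vn n M)"
proof (rule subspaceI)
  show "0 \<in> Vn n M" unfolding Vn_def using subspace_0[OF assms] by (intro CollectI exI[of _ 0]) simp
next
  fix x y assume "x \<in> Vn n M" "y \<in> Vn n M"
  then obtain m1 m2 where "x = scale (pi^n) m1" "m1 \<in> M" "scale (pi^(Suc n)) m1 = 0"
    "y = scale (pi^n) m2" "m2 \<in> M" "scale (pi^(Suc n)) m2 = 0" unfolding Vn_def by blast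
  then show "x + y \<in> Vn n M" unfolding Vn_def using subspace_add[OF assms]
    by (intro CollectI exI[of _ "m1 + m2"]) (simp add: scale_right_distrib)
next
  fix k x assume "x \<in> Vn n M"
  then obtain m1 where "x = scale (pi^n) m1" "m1 \<in> M" "scale (pi^(Suc n)) m1 = 0" unfolding Vn_def by blast
  note h = this
  have "scale k x = scale (pi^n) (scale k m1)" using h(1) by (simp only: scale_left_commute)
  moreover have "scale (pi^Suc n) (scale k m1) = 0"
    using h(3) scale_left_commute[of "pi^Suc n" k m1] by simp
  moreover have "scale k m1 \<in> M" using subspace_scale[OF assms h(2)] .
  ultimately show "scale k x \<in> Vn n M" unfolding Vn_def by blast
qed

lemma Vn_anti: assumes "subspace M" shows "Vn (Suc n) M \<subseteq> Vn n M"
proof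
  fix x assume "x \<in> Vn (Suc n) M"
  then obtain m1 where "x = scale (pi^Suc n) m1" "m1 \<in> M" "scale (pi^(Suc (Suc n))) m1 = 0" unfolding Vn_def by blast
  then show "x \<in> Vn n M" unfolding Vn_def using subspace_scale[OF assms]
    by (intro CollectI exI[of _ "scale pi m1"]) (simp add: ac_simps)
qed

lemma Vn_mono: "M \<subseteq> M' \<Longrightarrow> Vn n M \<subseteq> Vn n M'"
  unfolding Vn_def by blast

theorem artinian: "artinian_module scale"
  unfolding artinian_module_def
proof (intro allI impI)
  fix Mc :: "nat \<Rightarrow> 'a set"
  assume h: "\<forall>n. subspace (Mc n) \<and> Mc (Suc n) \<subseteq> Mc n"
  have sM: "subspace (Mc i)" for i using h by blast
  have Mmono: "i \<le> i' \<Longrightarrow> Mc i' \<subseteq> Mc i" for i i'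
  proof -
    assume "i \<le> i'"
    moreover have "\<And>n. Mc (Suc n) \<le> Mc n" using h by blast
    ultimately show ?thesis using lift_Suc_antimono_le[of Mc i i'] by blast
  qed
  define e where "e i n = ht (Vn n (Mc i))" for i n
  have "\<exists>N. \<forall>i\<ge>N. \<forall>n. e i n = e N n"
  proof (rule arr_stab)
    show "e i n \<le> s0" for i n unfolding e_def using ht_props(2)[OF Vn_sub[OF sM] Vn_K] .
    show "e (Suc i) n \<le> e i n" for i n unfolding e_def
      by (rule ht_mono[OF Vn_mono[OF h[rule_format, THEN conjunct2]] Vn_sub[OF sM] Vn_sub[OF sM] Vn_K])
    show "e i (Suc n) \<le> e i n" for i n unfolding e_def
      by (rule ht_mono[OF Vn_anti[OF sM] Vn_sub[OF sM] Vn_sub[OF sM] Vn_K])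
  qed
  then obtain N where N: "\<forall>i\<ge>N. \<forall>n. e i n = e N n" by blast
  show "\<exists>N. \<forall>n\<ge>N. Mc n = Mc N"
  proof (intro exI[of _ N] allI impI)
    fix i assume iN: "N \<le> i"
    have sub: "Mc i \<subseteq> Mc N" using Mmono[OF iN] .
    have Veq: "Vn n (Mc i) = Vn n (Mc N)" for n
    proof (rule ccontr)
      assume "Vn n (Mc i) \<noteq> Vn n (Mc N)"
      then have "Vn n (Mc i) \<subset> Vn n (Mc N)" using Vn_mono[OF sub] by blast
      then have "e i n < e N n" unfolding e_def by (rule ht_strict[OF _ Vn_sub[OF sM] Vn_sub[OF sM] Vn_K])
      moreover have "e i n = e N n" using N iN by blast
      ultimately show False by simp
    qed
    have key: "\<forall>x\<in>Mc N. scale (pi^n) x = 0 \<longrightarrow> x \<in> Mc i" for n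
    proof (induction n)
      case 0 then show ?case using subspace_0[OF sM] by simp
    next
      case (Suc n)
      show ?case
      proof (intro ballI impI)
        fix x assume x: "x \<in> Mc N" "scale (pi^Suc n) x = 0"
        then have "scale (pi^n) x \<in> Vn n (Mc N)" unfolding Vn_def by (intro CollectI exI[of _ x]) simp
        then have "scale (pi^n) x \<in> Vn n (Mc i)" using Veq by simp
        then obtain y where y: "y \<in> Mc i" "scale (pi^Suc n) y = 0" "scale (pi^n) x = scale (pi^n) y"
          unfolding Vn_def by (auto simp del: power_Suc)
        have "x - y \<in> Mc N" using subspace_diff[OF sM x(1)] y(1) sub by blast
        moreover have "scale (pi^n) (x - y) = 0" using y(3) by (simp add: scale_right_diff_distrib)
        ultimately have "x - y \<in> Mc i" using Suc.IH by blast
        then have "(x - y) + y \<in> Mc i" using subspace_add[OF sM] y(1) by blast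
        then show "x \<in> Mc i" by simp
      qed
    qed
    show "Mc i = Mc N"
    proof
      show "Mc N \<subseteq> Mc i"
      proof
        fix x assume "x \<in> Mc N"
        obtain n where "scale (pi^n) x = 0" using tors by blast
        then show "x \<in> Mc i" using key[of n] \<open>x \<in> Mc N\<close> by blast
      qed
    qed (rule sub)
  qed
qed

end

theorem lemma6:
  fixes scale :: "'d::{idom, semiring_char_0} \<Rightarrow> 'a::ab_group_add \<Rightarrow> 'a"
    and G :: "('g, 'm) monoid_scheme"
    and \<rho> :: "'g \<Rightarrow> 'a \<Rightarrow> 'a"
    and P :: "'d set"
    and r :: nat
  assumes "group G" and "finite (carrier G)"
    and "dedekind_domain TYPE('d)"
    and "DG_module scale G \<rho>"
    and "maximal_ideal P"
    and "P_module scale P"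
    and "residue_char_zero P"
    and "sr_DG_eq scale G \<rho> r"
  shows "artinian_module scale"
proof -
  have dg: "module scale"
    "\<forall>g\<in>carrier G. \<forall>a b. \<rho> g (a + b) = \<rho> g a + \<rho> g b"
    "\<forall>g\<in>carrier G. \<forall>d a. \<rho> g (scale d a) = scale d (\<rho> g a)"
    "\<forall>a. \<rho> \<one>\<^bsub>G\<^esub> a = a"
    "\<forall>g\<in>carrier G. \<forall>h\<in>carrier G. \<forall>a. \<rho> (g \<otimes>\<^bsub>G\<^esub> h) a = \<rho> g (\<rho> h a)"
    using assms(4) unfolding DG_module_def by blast+
  interpret M: module scale by (rule dg(1))
  have one: "\<one>\<^bsub>G\<^esub> \<in> carrier G" by (rule monoid.one_closed[OF group.is_monoid[OF assms(1)]])
  have mc: "g \<otimes>\<^bsub>G\<^esub> h \<in> carrier G" if "g \<in> carrier G" "h \<in> carrier G" for g h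
    by (rule monoid.m_closed[OF group.is_monoid[OF assms(1)] that])
  have rho0: "\<rho> g 0 = 0" if "g \<in> carrier G" for g
  proof -
    have "\<rho> g (0 + 0) = \<rho> g 0 + \<rho> g 0" using dg(2) that by blast
    then have "\<rho> g 0 + \<rho> g 0 = \<rho> g 0 + 0" by simp
    then show ?thesis by (rule add_left_imp_eq[symmetric, THEN sym])
  qed
  obtain pi where piP: "pi \<in> P" and loc: "\<forall>x\<in>P. \<exists>s d. s \<notin> P \<and> s * x = d * pi"
    using local_principal[OF assms(3,5)] by blast
  define K where "K = {a. scale pi a = 0}"
  have spanDG: "DG_submodule scale G \<rho> (DG_span scale G \<rho> S)" for S
    unfolding DG_span_def DG_submodule_def
  proof (intro conjI ballI)
    show "M.subspace (\<Inter>{B. (M.subspace B \<and> (\<forall>g\<in>carrier G. \<forall>b\<in>B. \<rho> g b \<in> B)) \<and> S \<subseteq> B})"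
      by (rule M.subspace_Inter) blast
  next
    fix g b assume "g \<in> carrier G" "b \<in> \<Inter>{B. (M.subspace B \<and> (\<forall>g\<in>carrier G. \<forall>b\<in>B. \<rho> g b \<in> B)) \<and> S \<subseteq> B}"
    then show "\<rho> g b \<in> \<Inter>{B. (M.subspace B \<and> (\<forall>g\<in>carrier G. \<forall>b\<in>B. \<rho> g b \<in> B)) \<and> S \<subseteq> B}" by blast
  qed
  have span_sup: "S \<subseteq> DG_span scale G \<rho> S" for S unfolding DG_span_def by blast
  have span_least: "DG_submodule scale G \<rho> B \<Longrightarrow> S \<subseteq> B \<Longrightarrow> DG_span scale G \<rho> S \<subseteq> B" for S B
    unfolding DG_span_def by blast
  have KDG: "DG_submodule scale G \<rho> K" unfolding DG_submodule_def
  proof (intro conjI ballI)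
    show "M.subspace K" unfolding K_def
    proof (rule M.subspaceI)
      fix x y assume "x \<in> {a. scale pi a = 0}" "y \<in> {a. scale pi a = 0}"
      then show "x + y \<in> {a. scale pi a = 0}" by (simp add: M.scale_right_distrib)
    next
      fix c x assume "x \<in> {a. scale pi a = 0}"
      then have "scale c (scale pi x) = 0" by simp
      then show "scale c x \<in> {a. scale pi a = 0}" by (simp only: M.scale_left_commute[of pi c x] mem_Collect_eq)
    qed simp
  next
    fix g b assume "g \<in> carrier G" "b \<in> K"
    then have "scale pi (\<rho> g b) = \<rho> g (scale pi b)" using dg(3) by simp
    also have "\<dots> = 0" using \<open>b \<in> K\<close> rho0[OF \<open>g \<in> carrier G\<close>] unfolding K_def by simp
    finally show "\<rho> g b \<in> K" unfolding K_def by simp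
  qed
  define s0 where "s0 = card (carrier G) * r"
  have fin: "\<forall>T. finite T \<and> T \<subseteq> {a. scale pi a = 0} \<longrightarrow>
       (\<exists>W. finite W \<and> card W \<le> s0 \<and> W \<subseteq> {a. scale pi a = 0} \<and> T \<subseteq> M.span W)"
  proof (intro allI impI)
    fix T assume T: "finite T \<and> T \<subseteq> {a. scale pi a = 0}"
    have TK: "DG_span scale G \<rho> T \<subseteq> K" using span_least[OF KDG] T unfolding K_def by blast
    have "DG_fin_gen scale G \<rho> (DG_span scale G \<rho> T)" unfolding DG_fin_gen_def using spanDG T by blast
    then obtain S where S: "finite S" "card S \<le> r" "DG_span scale G \<rho> S = DG_span scale G \<rho> T"
      using assms(8) unfolding sr_DG_eq_def by blast
    define W where "W = (\<lambda>(g, x). \<rho> g x) ` (carrier G \<times> S)"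
    have Wfin: "finite W" unfolding W_def using assms(2) S(1) by simp
    have "card W \<le> card (carrier G \<times> S)" unfolding W_def by (rule card_image_le) (use assms(2) S(1) in simp)
    also have "\<dots> = card (carrier G) * card S" by (simp add: card_cartesian_product)
    also have "\<dots> \<le> s0" unfolding s0_def using S(2) by simp
    finally have Wcard: "card W \<le> s0" .
    have WS: "W \<subseteq> DG_span scale G \<rho> S"
    proof
      fix y assume "y \<in> W"
      then obtain g x where gx: "g \<in> carrier G" "x \<in> S" "y = \<rho> g x" unfolding W_def by auto
      then show "y \<in> DG_span scale G \<rho> S" using spanDG[of S] span_sup[of S]
        unfolding DG_submodule_def by blast
    qed
    have WDG: "DG_submodule scale G \<rho> (M.span W)" unfolding DG_submodule_def
    proof (intro conjI ballI)
      show "M.subspace (M.span W)" by simp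
    next
      fix g b assume g: "g \<in> carrier G" and b: "b \<in> M.span W"
      have "M.span W \<subseteq> {x. \<rho> g x \<in> M.span W}"
      proof (rule M.span_minimal)
        show "W \<subseteq> {x. \<rho> g x \<in> M.span W}"
        proof
          fix y assume "y \<in> W"
          then obtain h x where hx: "h \<in> carrier G" "x \<in> S" "y = \<rho> h x" unfolding W_def by auto
          then have "\<rho> g y = \<rho> (g \<otimes>\<^bsub>G\<^esub> h) x" using dg(5) g by simp
          moreover have "\<rho> (g \<otimes>\<^bsub>G\<^esub> h) x \<in> W" unfolding W_def using mc[OF g hx(1)] hx(2) by force
          ultimately show "y \<in> {x. \<rho> g x \<in> M.span W}" using M.span_base by simp
        qed
        show "M.subspace {x. \<rho> g x \<in> M.span W}"
          by (rule M.subspaceI) (use rho0[OF g] dg(2,3) g in \<open>auto intro: M.span_add M.span_scale M.span_zero\<close>)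
      qed
      then show "\<rho> g b \<in> M.span W" using b by blast
    qed
    have "S \<subseteq> W"
    proof
      fix x assume "x \<in> S"
      then have "\<rho> \<one>\<^bsub>G\<^esub> x \<in> W" unfolding W_def using one by force
      then show "x \<in> W" using dg(4) by simp
    qed
    then have "DG_span scale G \<rho> S \<subseteq> M.span W" using span_least[OF WDG] M.span_superset by blast
    then have "T \<subseteq> M.span W" using S(3) span_sup[of T] by blast
    moreover have "W \<subseteq> {a. scale pi a = 0}" using WS S(3) TK unfolding K_def by blast
    ultimately show "\<exists>W. finite W \<and> card W \<le> s0 \<and> W \<subseteq> {a. scale pi a = 0} \<and> T \<subseteq> M.span W"
      using Wfin Wcard by blast
  qed
  interpret pm: pmod scale P pi s0
    by unfold_locales (rule assms(5), rule assms(6), rule piP, rule loc, rule fin)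
  show ?thesis by (rule pm.artinian)
qed

end
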